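(* Let $V$ be an $n$-dimensional real vector space. (i) If $L\subset V\oplus V^*$ is a forward LD structure, there is a symmetric bilinear form $\Psi$ on $V$ such that the symmetric bilinear form $\langle\!\langle (v_1,\eta_1),(v_2,\eta_2)\rangle\!\rangle=\langle\eta_1|v_2\rangle+\langle\eta_2|v_1\rangle-2\Psi(v_1,v_2)$ on $V\oplus V^*$ is nondegenerate of signature $(n,n)$ and $L$ is maximally isotropic for it. (ii) If $L$ is a backward LD structure, there is a symmetric bilinear form $\Phi$ on $V^*$ such that $\langle\!\langle (v_1,\eta_1),(v_2,\eta_2)\rangle\!\rangle=\langle\eta_1|v_2\rangle+\langle\eta_2|v_1\rangle-2\Phi(\eta_1,\eta_2)$ is nondegenerate of signature $(n,n)$ and $L$ is maximally isotropic for it.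
   Context: $\rho,\rho^*$ are the projections of $V\oplus V^*$ onto $V,V^*$; $\langle\eta|v\rangle$ the natural pairing; $W^\circ$ the annihilator; $L\cap V=\{v:(v,0)\in L\}$, $L\cap V^*=\{\eta:(0,\eta)\in L\}$. A forward Leibniz–Dirac (LD) structure is a subspace $L\subset V\oplus V^*$ with $\rho(L)^{\circ}=L\cap V^*$; a backward LD structure is one with $\rho^*(L)^{\circ}=L\cap V$. *)

theory Defs
  imports "HOL-Analysis.Analysis"
begin

text \<open>Coordinate model: V = real^'n (n = CARD('n)), V* = real^'n, with the
natural pairing given by the standard dot product.  An element of
V \<oplus> V* is a pair (v, eta).\<close>

definition pairing :: "real^'n \<Rightarrow> real^'n \<Rightarrow> real" where
  "pairing eta v = eta \<bullet> v"

definition rho :: "((real^'n) \<times> (real^'n)) set \<Rightarrow> (real^'n) set" where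
  "rho L = fst ` L"

definition rho_star :: "((real^'n) \<times> (real^'n)) set \<Rightarrow> (real^'n) set" where
  "rho_star L = snd ` L"

definition ann_in_dual :: "(real^'n) set \<Rightarrow> (real^'n) set" where
  "ann_in_dual W = {eta. \<forall>v\<in>W. pairing eta v = 0}"

definition ann_in_V :: "(real^'n) set \<Rightarrow> (real^'n) set" where
  "ann_in_V W = {v. \<forall>eta\<in>W. pairing eta v = 0}"

definition cap_V :: "((real^'n) \<times> (real^'n)) set \<Rightarrow> (real^'n) set" where
  "cap_V L = {v. (v, 0) \<in> L}"

definition cap_Vstar :: "((real^'n) \<times> (real^'n)) set \<Rightarrow> (real^'n) set" where
  "cap_Vstar L = {eta. (0, eta) \<in> L}"

definition forward_LD :: "((real^'n) \<times> (real^'n)) set \<Rightarrow> bool" where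
  "forward_LD L \<longleftrightarrow> subspace L \<and> ann_in_dual (rho L) = cap_Vstar L"

definition backward_LD :: "((real^'n) \<times> (real^'n)) set \<Rightarrow> bool" where
  "backward_LD L \<longleftrightarrow> subspace L \<and> ann_in_V (rho_star L) = cap_V L"

definition sym_bilinear :: "('a::real_vector \<Rightarrow> 'a \<Rightarrow> real) \<Rightarrow> bool" where
  "sym_bilinear B \<longleftrightarrow> bilinear B \<and> (\<forall>x y. B x y = B y x)"

definition nondegenerate :: "('a::real_vector \<Rightarrow> 'a \<Rightarrow> real) \<Rightarrow> bool" where
  "nondegenerate B \<longleftrightarrow> (\<forall>x. (\<forall>y. B x y = 0) \<longrightarrow> x = 0)"

definition has_signature :: "('a::euclidean_space \<Rightarrow> 'a \<Rightarrow> real) \<Rightarrow> nat \<Rightarrow> nat \<Rightarrow> bool" where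
  "has_signature B p q \<longleftrightarrow>
     (\<exists>U. subspace U \<and> dim U = p \<and> (\<forall>x\<in>U. x \<noteq> 0 \<longrightarrow> B x x > 0)) \<and>
     (\<forall>U. subspace U \<and> (\<forall>x\<in>U. x \<noteq> 0 \<longrightarrow> B x x > 0) \<longrightarrow> dim U \<le> p) \<and>
     (\<exists>U. subspace U \<and> dim U = q \<and> (\<forall>x\<in>U. x \<noteq> 0 \<longrightarrow> B x x < 0)) \<and>
     (\<forall>U. subspace U \<and> (\<forall>x\<in>U. x \<noteq> 0 \<longrightarrow> B x x < 0) \<longrightarrow> dim U \<le> q)"

definition isotropic :: "('a::real_vector \<Rightarrow> 'a \<Rightarrow> real) \<Rightarrow> 'a set \<Rightarrow> bool" where
  "isotropic B L \<longleftrightarrow> (\<forall>x\<in>L. \<forall>y\<in>L. B x y = 0)"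

definition maximally_isotropic :: "('a::real_vector \<Rightarrow> 'a \<Rightarrow> real) \<Rightarrow> 'a set \<Rightarrow> bool" where
  "maximally_isotropic B L \<longleftrightarrow> subspace L \<and> isotropic B L \<and>
     (\<forall>M. subspace M \<and> isotropic B M \<and> L \<subseteq> M \<longrightarrow> M = L)"

definition fwd_form :: "(real^'n \<Rightarrow> real^'n \<Rightarrow> real) \<Rightarrow>
    ((real^'n) \<times> (real^'n)) \<Rightarrow> ((real^'n) \<times> (real^'n)) \<Rightarrow> real" where
  "fwd_form Psi x y = pairing (snd x) (fst y) + pairing (snd y) (fst x) - 2 * Psi (fst x) (fst y)"

definition bwd_form :: "(real^'n \<Rightarrow> real^'n \<Rightarrow> real) \<Rightarrow>
    ((real^'n) \<times> (real^'n)) \<Rightarrow> ((real^'n) \<times> (real^'n)) \<Rightarrow> real" where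
  "bwd_form Phi x y = pairing (snd x) (fst y) + pairing (snd y) (fst x) - 2 * Phi (snd x) (snd y)"

end

theory Submission
  imports Defs
begin

lemma dim_bound:
  fixes A B :: "((real^'n) \<times> (real^'n)) set"
  assumes "subspace A" "subspace B" "A \<inter> B \<subseteq> {0}"
  shows "dim A + dim B \<le> 2 * CARD('n)"
proof -
  have "dim {x + y |x y. x \<in> A \<and> y \<in> B} + dim (A \<inter> B) = dim A + dim B"
    using dim_sums_Int[OF assms(1,2)] .
  moreover have "dim (A \<inter> B) = 0" using assms(3) by (simp add: dim_eq_0)
  moreover have "dim {x + y |x y. x \<in> A \<and> y \<in> B} \<le> DIM((real^'n) \<times> (real^'n))"
    by (rule dim_subset_UNIV)
  ultimately show ?thesis by (simp add: DIM_cart)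
qed

lemma dim_graph:
  fixes h :: "real^'n \<Rightarrow> real^'n"
  assumes "linear h"
  shows "dim (range (\<lambda>x. (x, h x))) = CARD('n)" "subspace (range (\<lambda>x. (x, h x)))"
proof -
  have lin: "linear (\<lambda>x. (x, h x))"
    using assms by (intro linearI) (auto simp: linear_add linear_scale)
  have "dim ((\<lambda>x. (x, h x)) ` UNIV) = dim (UNIV :: (real^'n) set)"
    by (rule dim_image_eq[OF lin]) (auto simp: inj_on_def)
  then show "dim (range (\<lambda>x. (x, h x))) = CARD('n)" by (simp add: DIM_cart)
  show "subspace (range (\<lambda>x. (x, h x)))"
    by (rule linear_subspace_image[OF lin subspace_UNIV])
qed

lemma double_ann:
  fixes W :: "(real^'n) set"
  assumes "subspace W"
  shows "ann_in_V (ann_in_dual W) = W" "subspace (ann_in_dual W)"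
proof -
  have e1: "ann_in_dual W = {y \<in> UNIV. \<forall>x\<in>W. orthogonal x y}"
    by (auto simp: ann_in_dual_def pairing_def orthogonal_def inner_commute)
  have e2: "ann_in_V (ann_in_dual W) = {y \<in> UNIV. \<forall>x\<in>ann_in_dual W. orthogonal x y}"
    by (auto simp: ann_in_V_def pairing_def orthogonal_def inner_commute)
  have s1: "subspace (ann_in_dual W)" unfolding e1 using subspace_orthogonal_to_vectors by simp
  then show "subspace (ann_in_dual W)" .
  have s2: "subspace (ann_in_V (ann_in_dual W))" unfolding e2 using subspace_orthogonal_to_vectors by simp
  have d1: "dim (ann_in_dual W) + dim W = dim (UNIV :: (real^'n) set)"
    unfolding e1 by (rule dim_subspace_orthogonal_to_vectors[OF assms subspace_UNIV]) simp
  have d2: "dim (ann_in_V (ann_in_dual W)) + dim (ann_in_dual W) = dim (UNIV :: (real^'n) set)"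
    unfolding e2 by (rule dim_subspace_orthogonal_to_vectors[OF s1 subspace_UNIV]) simp
  have sub: "W \<subseteq> ann_in_V (ann_in_dual W)"
    by (auto simp: ann_in_V_def ann_in_dual_def)
  show "ann_in_V (ann_in_dual W) = W"
    using subspace_dim_equal[OF assms s2 sub] d1 d2 by simp
qed


lemma forward_main:
  fixes L :: "((real^'n) \<times> (real^'n)) set"
  assumes "forward_LD L"
  shows "\<exists>Psi. sym_bilinear Psi \<and> nondegenerate (fwd_form Psi) \<and>
                  has_signature (fwd_form Psi) CARD('n) CARD('n) \<and>
                  maximally_isotropic (fwd_form Psi) L"
proof -
  have subL: "subspace L" and ann: "ann_in_dual (fst ` L) = cap_Vstar L"
    using assms by (auto simp: forward_LD_def rho_def)
  define W where "W = fst ` L"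
  have subW: "subspace W" unfolding W_def
    by (rule linear_subspace_image[OF _ subL]) (intro linearI, auto)
  obtain B where B: "B \<subseteq> W" "independent B" "W \<subseteq> span B"
    by (rule basis_exists[of W]) blast
  define f where "f b = (SOME eta. (b, eta) \<in> L)" for b
  have fB: "(b, f b) \<in> L" if "b \<in> B" for b
  proof -
    from that B(1) have "b \<in> fst ` L" by (auto simp: W_def)
    then obtain z where z: "z \<in> L" "b = fst z" by blast
    then have "(b, snd z) \<in> L" by simp
    then show ?thesis unfolding f_def by (rule someI)
  qed
  obtain g where g: "linear g" "\<forall>x\<in>B. g x = f x"
    using linear_independent_extend[OF B(2)] by blast
  have gsub: "subspace {w. (w, g w) \<in> L}"
    unfolding subspace_def
  proof (intro conjI ballI allI; simp)
    show "(0, g 0) \<in> L" using subL g(1) by (simp add: linear_0 subspace_0 flip: zero_prod_def)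
  next
    fix x y assume "(x, g x) \<in> L" "(y, g y) \<in> L"
    moreover have "(x + y, g (x + y)) = (x, g x) + (y, g y)" using g(1) by (simp add: linear_add)
    ultimately show "(x + y, g (x + y)) \<in> L" using subL by (metis subspace_add)
  next
    fix c x assume "(x, g x) \<in> L"
    moreover have "(c *\<^sub>R x, g (c *\<^sub>R x)) = c *\<^sub>R (x, g x)" using g(1) by (simp add: linear_scale)
    ultimately show "(c *\<^sub>R x, g (c *\<^sub>R x)) \<in> L" using subL by (metis subspace_scale)
  qed
  have gL: "(w, g w) \<in> L" if "w \<in> W" for w
  proof -
    have "span B \<subseteq> {w. (w, g w) \<in> L}"
      by (rule span_minimal[OF _ gsub]) (use fB g(2) in auto)
    then show ?thesis using that B(3) by auto
  qed
  define h where "h x = (1/2) *\<^sub>R (g x + adjoint g x)" for x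
  have linh: "linear h" unfolding h_def
    using g(1) adjoint_linear[OF g(1)]
    by (intro linearI) (auto simp: linear_add linear_scale algebra_simps)
  define Psi where "Psi x y = h x \<bullet> y" for x y
  have Psi_eq: "Psi x y = (g x \<bullet> y + g y \<bullet> x) / 2" for x y
  proof -
    have "adjoint g x \<bullet> y = g y \<bullet> x" using adjoint_works[OF g(1), of y x] by (simp add: inner_commute)
    then show ?thesis by (simp add: Psi_def h_def inner_add_left)
  qed
  have symb: "sym_bilinear Psi"
    unfolding sym_bilinear_def bilinear_def
  proof (intro conjI allI)
    fix x show "linear (Psi x)" unfolding Psi_def
      by (intro linearI) (auto simp: inner_add_right)
  next
    fix y show "linear (\<lambda>x. Psi x y)" unfolding Psi_def
      using linh by (intro linearI) (auto simp: linear_add linear_scale inner_add_left)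
  next
    fix x y show "Psi x y = Psi y x" unfolding Psi_eq by simp
  qed
  have Psi0: "Psi 0 y = 0" "Psi x 0 = 0" for x y
    unfolding Psi_eq using g(1) by (auto simp: linear_0)
  define Q where "Q = fwd_form Psi"
  have Qform: "Q (x, eta) (y, zeta) = eta \<bullet> y + zeta \<bullet> x - 2 * Psi x y" for x eta y zeta
    by (simp add: Q_def fwd_form_def pairing_def)
  have nd: "nondegenerate Q"
    unfolding nondegenerate_def
  proof (intro allI impI)
    fix z assume z: "\<forall>y. Q z y = 0"
    obtain x eta where zz: "z = (x, eta)" by fastforce
    from z[rule_format, of "(0, x)"] have "x = 0" by (simp add: zz Qform Psi0)
    with z[rule_format, of "(eta, 0)"] have "eta = 0" by (simp add: zz Qform Psi0)
    with \<open>x = 0\<close> show "z = 0" by (simp add: zz zero_prod_def)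
  qed
  define Up where "Up = range (\<lambda>x. (x, x + h x))"
  define Um where "Um = range (\<lambda>x. (x, h x - x))"
  have linp: "linear (\<lambda>x. x + h x)" "linear (\<lambda>x. h x - x)"
    using linh by (auto intro!: linearI simp: linear_add linear_scale algebra_simps)
  have Up: "subspace Up" "dim Up = CARD('n)" using dim_graph[OF linp(1)] by (auto simp: Up_def)
  have Um: "subspace Um" "dim Um = CARD('n)" using dim_graph[OF linp(2)] by (auto simp: Um_def)
  have Qd: "Q z z = 2 * (snd z \<bullet> fst z) - 2 * (h (fst z) \<bullet> fst z)" for z
    by (cases z) (simp add: Qform Psi_def inner_commute)
  have Uppos: "\<forall>z\<in>Up. z \<noteq> 0 \<longrightarrow> Q z z > 0"
    using linear_0[OF linh] by (auto simp: Up_def Qd inner_add_left zero_prod_def)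
  have Umneg: "\<forall>z\<in>Um. z \<noteq> 0 \<longrightarrow> Q z z < 0"
    using linear_0[OF linh] by (auto simp: Um_def Qd inner_diff_left zero_prod_def)
  have sig: "has_signature Q CARD('n) CARD('n)"
    unfolding has_signature_def
  proof (intro conjI allI impI)
    show "\<exists>U. subspace U \<and> dim U = CARD('n) \<and> (\<forall>x\<in>U. x \<noteq> 0 \<longrightarrow> 0 < Q x x)"
      using Up Uppos by blast
    show "\<exists>U. subspace U \<and> dim U = CARD('n) \<and> (\<forall>x\<in>U. x \<noteq> 0 \<longrightarrow> Q x x < 0)"
      using Um Umneg by blast
  next
    fix U assume U: "subspace U \<and> (\<forall>x\<in>U. x \<noteq> 0 \<longrightarrow> 0 < Q x x)"
    have "U \<inter> Um \<subseteq> {0}" using U Umneg by force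
    then show "dim U \<le> CARD('n)" using dim_bound[of U Um] U Um by simp
  next
    fix U assume U: "subspace U \<and> (\<forall>x\<in>U. x \<noteq> 0 \<longrightarrow> Q x x < 0)"
    have "U \<inter> Up \<subseteq> {0}" using U Uppos by force
    then show "dim U \<le> CARD('n)" using dim_bound[of U Up] U Up by simp
  qed
  have cap: "(0, a) \<in> L \<longleftrightarrow> a \<in> ann_in_dual W" for a
    using ann by (auto simp: W_def cap_Vstar_def)
  have decomp: "eta - g x \<in> ann_in_dual W" if "(x, eta) \<in> L" for x eta
  proof -
    have "x \<in> W" using that by (force simp: W_def)
    then have "(x, eta) - (x, g x) \<in> L" using gL that subL by (metis subspace_diff)
    then show ?thesis using cap by simp
  qed
  have iso: "isotropic Q L"
    unfolding isotropic_def
  proof (intro ballI)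
    fix z w assume z: "z \<in> L" and w: "w \<in> L"
    obtain x eta where zz: "z = (x, eta)" by fastforce
    obtain y zeta where ww: "w = (y, zeta)" by fastforce
    have "x \<in> W" "y \<in> W" using z w zz ww by (force simp: W_def)+
    have "(eta - g x) \<bullet> y = 0" using decomp[of x eta] z zz \<open>y \<in> W\<close>
      by (auto simp: ann_in_dual_def pairing_def)
    moreover have "(zeta - g y) \<bullet> x = 0" using decomp[of y zeta] w ww \<open>x \<in> W\<close>
      by (auto simp: ann_in_dual_def pairing_def)
    ultimately show "Q z w = 0" by (simp add: zz ww Qform Psi_eq inner_diff_left)
  qed
  have maxiso: "maximally_isotropic Q L"
    unfolding maximally_isotropic_def
  proof (intro conjI allI impI subL iso)
    fix M assume M: "subspace M \<and> isotropic Q M \<and> L \<subseteq> M"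
    have "M \<subseteq> L"
    proof
      fix z assume zM: "z \<in> M"
      obtain y zeta where zz: "z = (y, zeta)" by fastforce
      have "y \<in> ann_in_V (ann_in_dual W)"
        unfolding ann_in_V_def
      proof (intro CollectI ballI)
        fix a assume "a \<in> ann_in_dual W"
        then have "(0, a) \<in> M" using cap M by auto
        then have "Q (0, a) z = 0" using M zM by (auto simp: isotropic_def)
        then show "pairing a y = 0" by (simp add: zz Qform Psi0 pairing_def)
      qed
      then have yW: "y \<in> W" using double_ann[OF subW] by simp
      then have "(y, g y) \<in> M" using gL M by auto
      then have dM: "(y, zeta) - (y, g y) \<in> M" using M zM zz by (metis subspace_diff)
      have "zeta - g y \<in> ann_in_dual W"
        unfolding ann_in_dual_def
      proof (intro CollectI ballI)
        fix x assume "x \<in> W"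
        then have "(x, g x) \<in> M" using gL M by auto
        then have "Q (0, zeta - g y) (x, g x) = 0" using M dM by (auto simp: isotropic_def)
        then show "pairing (zeta - g y) x = 0" by (simp add: Qform Psi0 pairing_def)
      qed
      then have "(0, zeta - g y) \<in> L" using cap by simp
      then have "(0, zeta - g y) + (y, g y) \<in> L" using gL[OF yW] subL by (metis subspace_add)
      then show "z \<in> L" by (simp add: zz)
    qed
    then show "M = L" using M by blast
  qed
  show ?thesis using symb nd sig maxiso unfolding Q_def by blast
qed


lemma transfer_inv:
  fixes B :: "'a::euclidean_space \<Rightarrow> 'a \<Rightarrow> real" and s :: "'a \<Rightarrow> 'a"
  assumes lin: "linear s" and inv: "\<And>x. s (s x) = x"
  shows "nondegenerate B \<Longrightarrow> nondegenerate (\<lambda>x y. B (s x) (s y))"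
    and "has_signature B p q \<Longrightarrow> has_signature (\<lambda>x y. B (s x) (s y)) p q"
    and "maximally_isotropic B (s ` L) \<Longrightarrow> maximally_isotropic (\<lambda>x y. B (s x) (s y)) L"
proof -
  have ii: "s ` s ` U = U" for U by (force simp: image_image inv)
  have inj: "inj s" by (metis inv injI)
  have sub: "subspace U \<Longrightarrow> subspace (s ` U)" for U by (rule linear_subspace_image[OF lin])
  have dm: "dim (s ` U) = dim U" for U
    by (rule dim_image_eq[OF lin]) (use inj in \<open>auto simp: inj_on_def\<close>)
  have z: "s x = 0 \<longleftrightarrow> x = 0" for x by (metis inv lin linear_0)
  {
    assume nd: "nondegenerate B"
    show "nondegenerate (\<lambda>x y. B (s x) (s y))"
      unfolding nondegenerate_def
    proof (intro allI impI)
      fix x assume "\<forall>y. B (s x) (s y) = 0"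
      then have "\<forall>y. B (s x) y = 0" by (metis inv)
      then have "s x = 0" using nd by (simp add: nondegenerate_def)
      then show "x = 0" using z by simp
    qed
  }
  {
    assume hs: "has_signature B p q"
    have b1: "dim U \<le> p" if "subspace U" "\<forall>x\<in>U. x \<noteq> 0 \<longrightarrow> B x x > 0" for U
      using hs that unfolding has_signature_def by blast
    have b2: "dim U \<le> q" if "subspace U" "\<forall>x\<in>U. x \<noteq> 0 \<longrightarrow> B x x < 0" for U
      using hs that unfolding has_signature_def by blast
    show "has_signature (\<lambda>x y. B (s x) (s y)) p q"
      unfolding has_signature_def
    proof (intro conjI allI impI)
      obtain U where U: "subspace U" "dim U = p" "\<forall>x\<in>U. x \<noteq> 0 \<longrightarrow> B x x > 0"
        using hs unfolding has_signature_def by blast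
      show "\<exists>U. subspace U \<and> dim U = p \<and> (\<forall>x\<in>U. x \<noteq> 0 \<longrightarrow> 0 < B (s x) (s x))"
      proof (rule exI[of _ "s ` U"], intro conjI ballI impI)
        show "subspace (s ` U)" using sub U(1) .
        show "dim (s ` U) = p" using dm U(2) by simp
        fix x assume "x \<in> s ` U" "x \<noteq> 0"
        then show "0 < B (s x) (s x)" using U(3) inv z by auto
      qed
    next
      obtain U where U: "subspace U" "dim U = q" "\<forall>x\<in>U. x \<noteq> 0 \<longrightarrow> B x x < 0"
        using hs unfolding has_signature_def by blast
      show "\<exists>U. subspace U \<and> dim U = q \<and> (\<forall>x\<in>U. x \<noteq> 0 \<longrightarrow> B (s x) (s x) < 0)"
      proof (rule exI[of _ "s ` U"], intro conjI ballI impI)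
        show "subspace (s ` U)" using sub U(1) .
        show "dim (s ` U) = q" using dm U(2) by simp
        fix x assume "x \<in> s ` U" "x \<noteq> 0"
        then show "B (s x) (s x) < 0" using U(3) inv z by auto
      qed
    next
      fix U assume U: "subspace U \<and> (\<forall>x\<in>U. x \<noteq> 0 \<longrightarrow> 0 < B (s x) (s x))"
      have "\<forall>x\<in>s ` U. x \<noteq> 0 \<longrightarrow> B x x > 0" using U z by auto
      then have "dim (s ` U) \<le> p" using b1 sub U by blast
      then show "dim U \<le> p" using dm by simp
    next
      fix U assume U: "subspace U \<and> (\<forall>x\<in>U. x \<noteq> 0 \<longrightarrow> B (s x) (s x) < 0)"
      have "\<forall>x\<in>s ` U. x \<noteq> 0 \<longrightarrow> B x x < 0" using U z by auto
      then have "dim (s ` U) \<le> q" using b2 sub U by blast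
      then show "dim U \<le> q" using dm by simp
    qed
  }
  {
    assume mi: "maximally_isotropic B (s ` L)"
    have iso: "isotropic (\<lambda>x y. B (s x) (s y)) U \<longleftrightarrow> isotropic B (s ` U)" for U
      by (auto simp: isotropic_def)
    show "maximally_isotropic (\<lambda>x y. B (s x) (s y)) L"
      unfolding maximally_isotropic_def
    proof (intro conjI allI impI)
      show "subspace L" using mi sub[of "s ` L"] ii by (simp add: maximally_isotropic_def)
      show "isotropic (\<lambda>x y. B (s x) (s y)) L" using mi iso by (simp add: maximally_isotropic_def)
      fix M assume M: "subspace M \<and> isotropic (\<lambda>x y. B (s x) (s y)) M \<and> L \<subseteq> M"
      have "subspace (s ` M)" using sub M by blast
      moreover have "isotropic B (s ` M)" using iso M by blast
      moreover have "s ` L \<subseteq> s ` M" using M by blast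
      ultimately have "s ` M = s ` L" using mi unfolding maximally_isotropic_def by blast
      then show "M = L" using ii by metis
    qed
  }
qed

lemma backward_main:
  fixes L :: "((real^'n) \<times> (real^'n)) set"
  assumes "backward_LD L"
  shows "\<exists>Phi. sym_bilinear Phi \<and> nondegenerate (bwd_form Phi) \<and>
                  has_signature (bwd_form Phi) CARD('n) CARD('n) \<and>
                  maximally_isotropic (bwd_form Phi) L"
proof -
  define s where "s z = (snd z, fst z)" for z :: "(real^'n) \<times> (real^'n)"
  have lin: "linear s" unfolding s_def by (intro linearI) auto
  have inv: "s (s x) = x" for x by (simp add: s_def)
  have fw: "forward_LD (s ` L)"
  proof -
    have subL: "subspace L" and ann: "ann_in_V (rho_star L) = cap_V L"
      using assms by (auto simp: backward_LD_def)
    have "subspace (s ` L)" by (rule linear_subspace_image[OF lin subL])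
    moreover have "rho (s ` L) = rho_star L" by (force simp: rho_def rho_star_def s_def image_image)
    moreover have "cap_Vstar (s ` L) = cap_V L"
      by (force simp: cap_Vstar_def cap_V_def s_def)
    moreover have "ann_in_dual W = ann_in_V W" for W :: "(real^'n) set"
      by (auto simp: ann_in_dual_def ann_in_V_def pairing_def inner_commute)
    ultimately show ?thesis using ann by (simp add: forward_LD_def)
  qed
  obtain Psi where P: "sym_bilinear Psi" "nondegenerate (fwd_form Psi)"
      "has_signature (fwd_form Psi) CARD('n) CARD('n)" "maximally_isotropic (fwd_form Psi) (s ` L)"
    using forward_main[OF fw] by blast
  have eq: "bwd_form Psi = (\<lambda>x y. fwd_form Psi (s x) (s y))"
    by (auto simp: fun_eq_iff bwd_form_def fwd_form_def s_def pairing_def inner_commute)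
  show ?thesis
    apply (rule exI[of _ Psi])
    unfolding eq using P transfer_inv[OF lin inv, of "fwd_form Psi"] by blast
qed

theorem proposition2p9:
  fixes L :: "((real^'n) \<times> (real^'n)) set"
  shows "(forward_LD L \<longrightarrow>
            (\<exists>Psi. sym_bilinear Psi \<and> nondegenerate (fwd_form Psi) \<and>
                  has_signature (fwd_form Psi) CARD('n) CARD('n) \<and>
                  maximally_isotropic (fwd_form Psi) L)) \<and>
         (backward_LD L \<longrightarrow>
            (\<exists>Phi. sym_bilinear Phi \<and> nondegenerate (bwd_form Phi) \<and>
                  has_signature (bwd_form Phi) CARD('n) CARD('n) \<and>
                  maximally_isotropic (bwd_form Phi) L))"
  using forward_main backward_main by blast

end
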